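(* Let $\alpha>0$, $A\ge0$, $B>0$, $t>0$, and let $P_n(x,t)$ be the monic polynomials orthogonal on $[0,\infty)$ w.r.t. $w(x,t)=x^\alpha e^{-x}(A+B\theta(x-t))$, with norms $h_n(t)$ and $\beta_n=h_n/h_{n-1}$. Let $R_n(t)=Bt^\alpha e^{-t}\{P_n(t,t)\}^2/h_n(t)$ and $r_n(t)=Bt^\alpha e^{-t}P_n(t,t)P_{n-1}(t,t)/h_{n-1}(t)$. Then for $n\ge1$ (whenever the right-hand side is defined) $$\beta_n=\frac{1}{1-R_n}\left[r_n(2n+\alpha)+n(n+\alpha)+\frac{r_n^2}{R_n}\right].$$
   Context: $\theta$ is the Heaviside function ($1$ for $x>0$, $0$ otherwise); $P_n(t,t)$ is $P_n(x,t)$ at $x=t$. *)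

theory Defs
  imports "HOL-Analysis.Analysis" "HOL-Computational_Algebra.Polynomial"
begin

definition heaviside :: "real \<Rightarrow> real" where
  "heaviside x = (if x > 0 then 1 else 0)"

definition jump_laguerre_weight :: "real \<Rightarrow> real \<Rightarrow> real \<Rightarrow> real \<Rightarrow> real \<Rightarrow> real" where
  "jump_laguerre_weight \<alpha> A B t x = x powr \<alpha> * exp (- x) * (A + B * heaviside (x - t))"

definition monic_orthogonal_family :: "(real \<Rightarrow> real) \<Rightarrow> (nat \<Rightarrow> real poly) \<Rightarrow> bool" where
  "monic_orthogonal_family w P \<longleftrightarrow>
     (\<forall>n. degree (P n) = n \<and> lead_coeff (P n) = 1) \<and>
     (\<forall>m n. m \<noteq> n \<longrightarrow>
        (LINT x:{0..}|lborel. poly (P m) x * poly (P n) x * w x) = 0)"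

definition op_norm :: "(real \<Rightarrow> real) \<Rightarrow> (nat \<Rightarrow> real poly) \<Rightarrow> nat \<Rightarrow> real" where
  "op_norm w P n = (LINT x:{0..}|lborel. (poly (P n) x)^2 * w x)"

end

theory Submission
  imports Defs "HOL-Real_Asymp.Real_Asymp"
begin

lemma mono_int:
  assumes "\<alpha> > 0"
  shows "set_integrable lborel {0<..} (\<lambda>x::real. x^k * x powr (\<alpha>-1) * exp (-x))"
proof -
  have "((\<lambda>x. x powr (\<alpha> + k - 1) / exp x) has_integral Gamma (\<alpha>+k)) {0..}"
    using Gamma_integral_real[of "\<alpha> + k"] assms by simp
  hence "(\<lambda>x. x powr (\<alpha> + k - 1) / exp x) absolutely_integrable_on {0..}"
    by (intro nonnegative_absolutely_integrable_1) (auto simp: integrable_on_def)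
  hence "(\<lambda>x. x powr (\<alpha> + k - 1) / exp x) absolutely_integrable_on {0<..}"
    by (rule set_integrable_subset) auto
  hence 1: "(\<lambda>x. x^k * x powr (\<alpha>-1) * exp (-x)) absolutely_integrable_on {0<..}"
  proof (rule set_integrable_cong[THEN iffD1, rotated -1])
    fix x :: real assume "x \<in> {0<..}"
    then show "x powr (\<alpha> + k - 1) / exp x = x^k * x powr (\<alpha>-1) * exp (-x)"
      by (simp add: powr_add powr_realpow exp_minus field_simps powr_diff)
  qed auto
  show ?thesis unfolding set_integrable_def
    using 1 unfolding set_integrable_def
    by (subst (asm) integrable_completion) (auto intro!: borel_measurable_continuous_on_indicator)
qed

lemma powr_minus_one: "(x::real) > 0 \<Longrightarrow> x powr a = x * x powr (a - 1)"
  by (simp add: powr_diff)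

locale jl =
  fixes \<alpha> A B t :: real
  assumes alpha_pos: "\<alpha> > 0" and t_pos: "t > 0"
begin

definition gf :: "real poly \<Rightarrow> real \<Rightarrow> real" where
  "gf q x = poly q x * x powr (\<alpha>-1) * exp (-x)"

definition K :: "real poly \<Rightarrow> real" where
  "K q = (LINT x:{0<..}|lborel. gf q x)"

definition Kt :: "real poly \<Rightarrow> real" where
  "Kt q = (LINT x:{t<..}|lborel. gf q x)"

definition J :: "real poly \<Rightarrow> real" where
  "J q = A * K q + B * Kt q"

lemma gf_int: "set_integrable lborel {0<..} (gf q)"
proof -
  have "set_integrable lborel {0<..} (\<lambda>x. \<Sum>i\<le>degree q. coeff q i * (x^i * x powr (\<alpha>-1) * exp (-x)))"
  proof -
    have "integrable lborel (\<lambda>x. \<Sum>i\<le>degree q. coeff q i * (indicat_real {0<..} x *\<^sub>R (x^i * x powr (\<alpha>-1) * exp (-x))))"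
      apply (rule Bochner_Integration.integrable_sum)
      apply (rule integrable_mult_right)
      using mono_int[OF alpha_pos, unfolded set_integrable_def] by blast
    then show ?thesis unfolding set_integrable_def by (simp add: sum_distrib_left mult.left_commute)
  qed
  then show ?thesis
    by (rule set_integrable_cong[THEN iffD1, rotated -1])
       (auto simp: gf_def poly_altdef sum_distrib_right mult.assoc)
qed

lemma gf_int_t: "set_integrable lborel {t<..} (gf q)"
  by (rule set_integrable_subset[OF gf_int]) (use t_pos in auto)

lemma gf_add: "gf (p + q) x = gf p x + gf q x"
  by (simp add: gf_def algebra_simps)
lemma gf_smult: "gf (smult c p) x = c * gf p x"
  by (simp add: gf_def algebra_simps)
lemma gf_diff: "gf (p - q) x = gf p x - gf q x"
  by (simp add: gf_def algebra_simps)

lemma J_add: "J (p + q) = J p + J q"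
  unfolding J_def K_def Kt_def gf_add
  using gf_int gf_int_t by (simp add: algebra_simps)
lemma J_diff: "J (p - q) = J p - J q"
  unfolding J_def K_def Kt_def gf_diff
  using gf_int gf_int_t by (simp add: algebra_simps)
lemma J_smult: "J (smult c p) = c * J p"
  unfolding J_def K_def Kt_def gf_smult
  by (simp add: algebra_simps)
lemma J_0: "J 0 = 0"
  using J_smult[of 0 0] by simp

definition Fq :: "real poly \<Rightarrow> real \<Rightarrow> real" where
  "Fq q x = x powr \<alpha> * exp (-x) * poly q x"

definition Dop :: "real poly \<Rightarrow> real poly" where
  "Dop q = smult \<alpha> q + [:0,1:] * pderiv q - [:0,1:] * q"

lemma deriv_F:
  assumes "x > 0"
  shows "(Fq q has_real_derivative gf (Dop q) x) (at x)"
proof -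
  have "(Fq q has_real_derivative
     (\<alpha> * x powr (\<alpha> - 1)) * exp (-x) * poly q x + x powr \<alpha> * (- exp (-x)) * poly q x
       + x powr \<alpha> * exp (-x) * poly (pderiv q) x) (at x)"
    unfolding Fq_def using assms
    by (auto intro!: derivative_eq_intros simp: field_simps)
  moreover have "(\<alpha> * x powr (\<alpha> - 1)) * exp (-x) * poly q x + x powr \<alpha> * (- exp (-x)) * poly q x
       + x powr \<alpha> * exp (-x) * poly (pderiv q) x = gf (Dop q) x"
    using powr_minus_one[OF assms, of \<alpha>]
    by (simp add: gf_def Dop_def algebra_simps)
  ultimately show ?thesis by simp
qed

lemma contF: "x > 0 \<Longrightarrow> isCont (gf q) x"
  unfolding gf_def by (auto intro!: continuous_intros)

lemma Fq_top: "(Fq q \<longlongrightarrow> 0) at_top"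
proof -
  have "((\<lambda>x. \<Sum>i\<le>degree q. coeff q i * (x powr \<alpha> * exp (- x) * x^i)) \<longlongrightarrow> (\<Sum>i\<le>degree q. coeff q i * 0)) at_top"
  proof (intro tendsto_sum tendsto_mult_left)
    fix i show "((\<lambda>x::real. x powr \<alpha> * exp (- x) * x^i) \<longlongrightarrow> 0) at_top" by real_asymp
  qed
  then show ?thesis unfolding Fq_def poly_altdef by (simp add: sum_distrib_left mult_ac)
qed

lemma Fq_zero: "(Fq q \<longlongrightarrow> 0) (at_right 0)"
proof -
  have "((\<lambda>x. x powr \<alpha>) \<longlongrightarrow> 0) (at_right (0::real))"
    by (rule tendsto_zero_powrI) (auto simp: alpha_pos eventually_at_right_less intro: eventually_at_rightI[of 0 1])
  moreover have "isCont (\<lambda>x. exp (-x) * poly q x) 0" by (auto intro!: continuous_intros)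
  then have "((\<lambda>x. exp (-x) * poly q x) \<longlongrightarrow> exp (-0) * poly q 0) (at_right (0::real))"
    by (simp add: isCont_def filterlim_at_split)
  ultimately have "((\<lambda>x. x powr \<alpha> * (exp (-x) * poly q x)) \<longlongrightarrow> 0 * (exp (-0) * poly q 0)) (at_right (0::real))"
    by (rule tendsto_mult)
  then show ?thesis unfolding Fq_def by (simp add: mult.assoc)
qed

lemma K_D: "K (Dop q) = 0"
proof -
  have "(LBINT x=ereal 0..\<infinity>. gf (Dop q) x) = 0 - 0"
  proof (rule interval_integral_FTC_integrable[where F = "Fq q"])
    show "set_integrable lborel (einterval (ereal 0) \<infinity>) (gf (Dop q))"
      using gf_int by (simp add: einterval_def greaterThan_def)
    show "((Fq q \<circ> real_of_ereal) \<longlongrightarrow> 0) (at_right (ereal 0))"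
      unfolding ereal_tendsto_simps using Fq_zero .
    show "((Fq q \<circ> real_of_ereal) \<longlongrightarrow> 0) (at_left \<infinity>)"
      unfolding ereal_tendsto_simps using Fq_top .
  qed (auto intro: contF deriv_F[THEN has_real_derivative_iff_has_vector_derivative[THEN iffD1]])
  then show ?thesis
    by (simp add: K_def interval_lebesgue_integral_def einterval_def greaterThan_def)
qed

lemma Kt_D: "Kt (Dop q) = - Fq q t"
proof -
  have "(LBINT x=ereal t..\<infinity>. gf (Dop q) x) = 0 - Fq q t"
  proof (rule interval_integral_FTC_integrable[where F = "Fq q"])
    show "set_integrable lborel (einterval (ereal t) \<infinity>) (gf (Dop q))"
      using gf_int_t by (simp add: einterval_def greaterThan_def)
    have "isCont (Fq q) t" unfolding Fq_def using t_pos by (auto intro!: continuous_intros)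
    then show "((Fq q \<circ> real_of_ereal) \<longlongrightarrow> Fq q t) (at_right (ereal t))"
      unfolding ereal_tendsto_simps by (simp add: isCont_def filterlim_at_split)
    show "((Fq q \<circ> real_of_ereal) \<longlongrightarrow> 0) (at_left \<infinity>)"
      unfolding ereal_tendsto_simps using Fq_top .
  qed (use t_pos in \<open>auto intro: contF deriv_F[THEN has_real_derivative_iff_has_vector_derivative[THEN iffD1]]\<close>)
  then show ?thesis
    by (simp add: Kt_def interval_lebesgue_integral_def einterval_def greaterThan_def)
qed

lemma J_D: "J (Dop q) = - (B * t powr \<alpha> * exp (-t) * poly q t)"
  unfolding J_def K_D Kt_D Fq_def by simp


lemma weight_pt:
  "indicator {0..} x * (poly q x * jump_laguerre_weight \<alpha> A B t x)
   = A * (indicator {0<..} x * gf ([:0,1:] * q) x) + B * (indicator {t<..} x * gf ([:0,1:] * q) x)"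
proof (cases "x > 0")
  case True
  then show ?thesis using powr_minus_one[OF True, of \<alpha>] t_pos
    by (auto simp: jump_laguerre_weight_def gf_def heaviside_def indicator_def algebra_simps)
next
  case False
  then show ?thesis using t_pos
    by (auto simp: jump_laguerre_weight_def gf_def heaviside_def indicator_def)
qed

lemma weight_int: "set_integrable lborel {0..} (\<lambda>x. poly q x * jump_laguerre_weight \<alpha> A B t x)"
  using gf_int[of "[:0,1:] * q"] gf_int_t[of "[:0,1:] * q"]
  unfolding set_integrable_def by (simp add: weight_pt)

lemma weight_eq: "(LINT x:{0..}|lborel. poly q x * jump_laguerre_weight \<alpha> A B t x) = J ([:0,1:] * q)"
  using gf_int[of "[:0,1:] * q"] gf_int_t[of "[:0,1:] * q"]
  unfolding set_integrable_def set_lebesgue_integral_def J_def K_def Kt_def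
  by (simp add: weight_pt)

definition ip :: "real poly \<Rightarrow> real poly \<Rightarrow> real" where
  "ip a b = J (a * b * [:0,1:])"

lemma ip_comm: "ip a b = ip b a" unfolding ip_def by (simp add: mult_ac)
lemma ip_add: "ip a (b + c) = ip a b + ip a c"
proof -
  have "a * (b + c) * [:0,1:] = a * b * [:0,1:] + a * c * [:0,1:]" by (simp only: distrib_left distrib_right)
  then show ?thesis by (simp only: ip_def J_add)
qed
lemma ip_diff: "ip a (b - c) = ip a b - ip a c"
proof -
  have "a * (b - c) * [:0,1:] = a * b * [:0,1:] - a * c * [:0,1:]" by (simp only: right_diff_distrib left_diff_distrib)
  then show ?thesis by (simp only: ip_def J_diff)
qed
lemma ip_smult: "ip a (smult c b) = c * ip a b"
proof -
  have "a * smult c b * [:0,1:] = smult c (a * b * [:0,1:])" by (simp only: mult_smult_left mult_smult_right)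
  then show ?thesis by (simp only: ip_def J_smult)
qed
lemma ip_0: "ip a 0 = 0" unfolding ip_def by (simp add: J_0)

lemma diffdeg:
  fixes a b :: "real poly"
  assumes "degree a \<le> m" "degree b \<le> m" "coeff a m = coeff b m"
  shows "a - b = 0 \<or> degree (a - b) < m"
proof -
  have d: "degree (a - b) \<le> m" using assms by (intro degree_diff_le)
  have c: "coeff (a - b) m = 0" using assms by simp
  show ?thesis
  proof (cases "a - b = 0")
    case False
    then have "degree (a - b) \<noteq> m" using c by (metis leading_coeff_0_iff)
    then show ?thesis using d by simp
  qed simp
qed

end

locale jlP = jl +
  fixes P :: "nat \<Rightarrow> real poly"
  assumes mof: "monic_orthogonal_family (jump_laguerre_weight \<alpha> A B t) P"
begin

lemma degP: "degree (P n) = n" and leadP: "coeff (P n) n = 1"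
  using mof unfolding monic_orthogonal_family_def by (metis)+

lemma orth: "m \<noteq> n \<Longrightarrow> ip (P m) (P n) = 0"
proof -
  assume "m \<noteq> n"
  then have "(LINT x:{0..}|lborel. poly (P m) x * poly (P n) x * jump_laguerre_weight \<alpha> A B t x) = 0"
    using mof unfolding monic_orthogonal_family_def by blast
  then have "(LINT x:{0..}|lborel. poly (P m * P n) x * jump_laguerre_weight \<alpha> A B t x) = 0"
    by simp
  then show ?thesis unfolding weight_eq ip_def by (simp add: mult_ac)
qed

lemma norm_eq: "op_norm (jump_laguerre_weight \<alpha> A B t) P n = ip (P n) (P n)"
proof -
  have "op_norm (jump_laguerre_weight \<alpha> A B t) P n
     = (LINT x:{0..}|lborel. poly (P n * P n) x * jump_laguerre_weight \<alpha> A B t x)"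
    unfolding op_norm_def by (simp add: power2_eq_square)
  then show ?thesis unfolding weight_eq ip_def by (simp add: mult_ac)
qed

lemma orth_deg_aux: "\<forall>f. degree f \<le> d \<longrightarrow> d < n \<longrightarrow> ip (P n) f = 0"
proof (induction d)
  case 0
  show ?case
  proof (intro allI impI)
    fix f :: "real poly" assume f: "degree f \<le> 0" "0 < n"
    have "f - smult (coeff f 0) (P 0) = 0"
      using diffdeg[of f 0 "smult (coeff f 0) (P 0)"] f degP[of 0] leadP[of 0] by simp
    then have "f = smult (coeff f 0) (P 0)" by simp
    then show "ip (P n) f = 0" using orth[of n 0] f by (metis ip_smult mult_zero_right not_less_zero)
  qed
next
  case (Suc d)
  show ?case
  proof (intro allI impI)
    fix f :: "real poly" assume f: "degree f \<le> Suc d" "Suc d < n"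
    define f' where "f' = f - smult (coeff f (Suc d)) (P (Suc d))"
    have "f' = 0 \<or> degree f' < Suc d"
      unfolding f'_def using diffdeg[of f "Suc d" "smult (coeff f (Suc d)) (P (Suc d))"] f degP leadP
      by simp
    then have "ip (P n) f' = 0" using Suc f by (auto simp: ip_0)
    moreover have eq: "f = f' + smult (coeff f (Suc d)) (P (Suc d))" unfolding f'_def by simp
    have "ip (P n) f = ip (P n) f' + coeff f (Suc d) * ip (P n) (P (Suc d))"
      by (metis eq ip_add ip_smult)
    ultimately show "ip (P n) f = 0" using orth[of n "Suc d"] f
      by simp
  qed
qed

lemma orth_deg: "f = 0 \<or> degree f < n \<Longrightarrow> ip (P n) f = 0"
  using orth_deg_aux[of "degree f" n] by (auto simp: ip_0)

lemma main_identity: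
  assumes n1: "n \<ge> 1"
  defines "p \<equiv> P n" and "s \<equiv> P (n - 1)"
  defines "W \<equiv> B * t powr \<alpha> * exp (-t)" and "u \<equiv> poly (P n) t" and "v \<equiv> poly (P (n - 1)) t"
  defines "h \<equiv> ip p p" and "g \<equiv> ip s s"
  shows "(h - W * u^2) * (g - W * v^2) = (n * g + W * u * v) * (n * g + W * u * v + \<alpha> * g)"
proof -
  let ?X = "[:0,1::real:]"
  have dp: "degree p = n" and lp: "coeff p n = 1" using degP leadP by (simp_all add: p_def)
  have ds: "degree s = n - 1" and ls: "coeff s (n - 1) = 1" using degP leadP by (simp_all add: s_def)
  obtain p0 d where pd: "p = pCons p0 d" by (rule pCons_cases)
  obtain s0 e where se: "s = pCons s0 e" by (rule pCons_cases)
  have d0: "d \<noteq> 0" using dp pd n1 by auto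
  have dd: "degree d = n - 1" using dp pd d0 by auto
  have ld: "coeff d (n - 1) = 1" using lp pd n1 by (metis Suc_diff_1 coeff_pCons_Suc less_le_trans zero_less_one)
  have de: "e = 0 \<or> degree e < n - 1" using ds se by (cases "e = 0") auto
  have de': "e = 0 \<or> degree e < n" using de by auto
  have pu: "poly p t = u" and sv: "poly s t = v" by (simp_all add: p_def u_def s_def v_def)
  have o_ps: "ip p s = 0" using orth_deg[of s n] ds n1 unfolding p_def by simp
  have o_pd: "ip p d = 0" using orth_deg[of d n] dd n1 unfolding p_def by simp
  have o_pe: "ip p e = 0" using orth_deg[of e n] de' unfolding p_def by simp
  have o_se: "ip s e = 0" using orth_deg[of e "n-1"] de unfolding s_def by simp
  have "d - s = 0 \<or> degree (d - s) < n - 1" using diffdeg[of d "n-1" s] dd ds ld ls by simp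
  then have o_sds: "ip s (d - s) = 0" using orth_deg[of "d - s" "n-1"] unfolding s_def by simp
  have o_sd: "ip s d = g" using o_sds unfolding g_def ip_diff by simp
  have o_pp': "ip p (pderiv p) = 0"
    using orth_deg[of "pderiv p" n] dp n1 degree_pderiv[of p] unfolding p_def by simp
  have o_ps': "ip p (pderiv s) = 0"
    using orth_deg[of "pderiv s" n] ds n1 degree_pderiv[of s] unfolding p_def by simp
  have o_ss': "ip s (pderiv s) = 0"
  proof (cases "n - 1 = 0")
    case True then have "pderiv s = 0" using ds pderiv_eq_0_iff by auto
    then show ?thesis by (simp add: ip_0)
  next
    case False then have "degree (pderiv s) < n - 1" using ds degree_pderiv[of s] by simp
    then show ?thesis
      using orth_deg[of "pderiv s" "n-1"] unfolding s_def by simp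
  qed
  have dp': "degree (pderiv p) = n - 1" using dp degree_pderiv[of p] by simp
  have lp': "coeff (pderiv p) (n - 1) = n" using lp n1 by (simp add: coeff_pderiv)
  have "pderiv p - smult n s = 0 \<or> degree (pderiv p - smult n s) < n - 1"
    using diffdeg[of "pderiv p" "n-1" "smult n s"] dp' lp' ds ls by simp
  then have "ip s (pderiv p - smult n s) = 0" using orth_deg[of _ "n-1"] unfolding s_def by simp
  then have o_sp': "ip s (pderiv p) = n * g" unfolding ip_diff ip_smult g_def by simp
  have "p * p = smult p0 p + p * d * ?X" by (subst (2) pd) (simp add: mult_pCons_right)
  then have E1: "J (p * p) = p0 * J p" by (simp only: J_add J_smult ip_def[symmetric] o_pd)
  have "p * s = smult s0 p + p * e * ?X" by (subst se) (simp add: mult_pCons_right)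
  then have E2: "J (p * s) = s0 * J p" by (simp only: J_add J_smult ip_def[symmetric] o_pe)
  have "p * s = smult p0 s + s * d * ?X" by (subst pd) (simp add: mult_pCons_left mult_ac)
  then have E3: "J (p * s) = p0 * J s + g" by (simp only: J_add J_smult ip_def[symmetric] o_sd)
  have "s * s = smult s0 s + s * e * ?X" by (subst (2) se) (simp add: mult_pCons_right)
  then have E4: "J (s * s) = s0 * J s" by (simp only: J_add J_smult ip_def[symmetric] o_se)
  have "Dop (p * p) = smult \<alpha> (p * p) + p * pderiv p * ?X + p * pderiv p * ?X - p * p * ?X"
    by (simp add: Dop_def pderiv_mult algebra_simps)
  then have "J (Dop (p * p)) = \<alpha> * J (p * p) - h"
    by (simp only: J_add J_diff J_smult ip_def[symmetric] o_pp' h_def)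
  then have E5: "\<alpha> * J (p * p) - h = - (W * u^2)"
    using J_D[of "p * p"] by (simp add: W_def pu power2_eq_square)
  have "Dop (s * s) = smult \<alpha> (s * s) + s * pderiv s * ?X + s * pderiv s * ?X - s * s * ?X"
    by (simp add: Dop_def pderiv_mult algebra_simps)
  then have "J (Dop (s * s)) = \<alpha> * J (s * s) - g"
    by (simp only: J_add J_diff J_smult ip_def[symmetric] o_ss' g_def)
  then have E6: "\<alpha> * J (s * s) - g = - (W * v^2)"
    using J_D[of "s * s"] by (simp add: W_def sv power2_eq_square)
  have "Dop (p * s) = smult \<alpha> (p * s) + s * pderiv p * ?X + p * pderiv s * ?X - p * s * ?X"
    by (simp add: Dop_def pderiv_mult algebra_simps)
  then have "J (Dop (p * s)) = \<alpha> * J (p * s) + n * g"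
    by (simp only: J_add J_diff J_smult ip_def[symmetric] o_sp' o_ps' o_ps)
  then have E7: "\<alpha> * J (p * s) + n * g = - (W * u * v)"
    using J_D[of "p * s"] by (simp add: W_def pu sv)
  have key: "J (p * p) * J (s * s) = J (p * s) * (J (p * s) - g)"
    using E1 E2 E3 E4 by simp
  have "(h - W * u^2) * (g - W * v^2) = (\<alpha> * J (p * p)) * (\<alpha> * J (s * s))"
  proof -
    have "h - W * u^2 = \<alpha> * J (p * p)" "g - W * v^2 = \<alpha> * J (s * s)" using E5 E6 by linarith+
    then show ?thesis by simp
  qed
  also have "\<dots> = (\<alpha> * J (p * s)) * (\<alpha> * J (p * s) - \<alpha> * g)"
  proof -
    have "(\<alpha> * J (p * p)) * (\<alpha> * J (s * s)) = \<alpha> * \<alpha> * (J (p * p) * J (s * s))" by simp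
    also have "\<dots> = \<alpha> * \<alpha> * (J (p * s) * (J (p * s) - g))" using key by simp
    finally show ?thesis by (simp add: algebra_simps)
  qed
  also have "\<dots> = (n * g + W * u * v) * (n * g + W * u * v + \<alpha> * g)"
  proof -
    have Z: "\<alpha> * J (p * s) = - (n * g + W * u * v)" using E7 by linarith
    show ?thesis unfolding Z by (simp add: algebra_simps)
  qed
  finally show ?thesis .
qed

lemma g_nonzero:
  assumes n1: "n \<ge> 1" and AB: "A \<ge> 0" "B \<ge> 0" and h0: "ip (P n) (P n) \<noteq> 0"
  shows "ip (P (n - 1)) (P (n - 1)) \<noteq> 0"
proof
  let ?X = "[:0,1::real:]"
  let ?w = "jump_laguerre_weight \<alpha> A B t"
  define p where "p = P n"
  define s where "s = P (n - 1)"
  assume g0: "ip (P (n - 1)) (P (n - 1)) = 0"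
  have "degree (?X * s) \<le> degree ?X + degree s" by (rule degree_mult_le)
  also have "\<dots> = n" using degP[of "n-1"] n1 unfolding s_def by simp
  finally have "degree (?X * s) \<le> n" .
  moreover have "coeff (?X * s) n = coeff p n" using leadP[of "n-1"] leadP[of n] n1 unfolding s_def p_def
    by (cases n) auto
  ultimately have "?X * s - p = 0 \<or> degree (?X * s - p) < n"
    using diffdeg[of "?X * s" n p] degP[of n] unfolding p_def by simp
  then have "ip p (?X * s - p) = 0" using orth_deg unfolding p_def by blast
  then have hX: "ip p (?X * s) = ip p p" unfolding ip_diff by simp
  have wnn: "x \<ge> 0 \<Longrightarrow> ?w x \<ge> 0" for x
    using AB by (auto simp: jump_laguerre_weight_def heaviside_def)
  have "(LINT x:{0..}|lborel. poly (s * s) x * ?w x) = 0"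
    using g0 unfolding weight_eq ip_def s_def by (simp add: mult_ac)
  then have "integral\<^sup>L lborel (\<lambda>x. indicator {0..} x * (poly (s * s) x * ?w x)) = 0"
    by (simp add: set_lebesgue_integral_def)
  moreover have "integrable lborel (\<lambda>x. indicator {0..} x * (poly (s * s) x * ?w x))"
    using weight_int[of "s * s"] by (simp add: set_integrable_def)
  moreover have "AE x in lborel. 0 \<le> indicator {0..} x * (poly (s * s) x * ?w x)"
    using wnn by (auto simp: indicator_def)
  ultimately have ae: "AE x in lborel. indicator {0..} x * (poly (s * s) x * ?w x) = 0"
    using integral_nonneg_eq_0_iff_AE by blast
  have "AE x in lborel. indicator {0..} x * (poly (p * ?X * s) x * ?w x) = 0"
    using ae by eventually_elim (auto simp: indicator_def split: if_splits)
  then have "integral\<^sup>L lborel (\<lambda>x. indicator {0..} x * (poly (p * ?X * s) x * ?w x)) = 0"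
    by (rule integral_eq_zero_AE)
  then have "(LINT x:{0..}|lborel. poly (p * ?X * s) x * ?w x) = 0"
    by (simp add: set_lebesgue_integral_def)
  then have "ip p (?X * s) = 0" unfolding weight_eq ip_def by (simp add: mult_ac)
  then show False using hX h0 unfolding p_def by simp
qed

end

theorem lemma8:
  fixes \<alpha> A B t :: real and P :: "nat \<Rightarrow> real poly" and n :: nat
    and h :: "nat \<Rightarrow> real" and \<beta> R r :: real
  assumes "\<alpha> > 0" and "A \<ge> 0" and "B > 0" and "t > 0"
    and "monic_orthogonal_family (jump_laguerre_weight \<alpha> A B t) P"
    and "n \<ge> 1"
  defines "h \<equiv> op_norm (jump_laguerre_weight \<alpha> A B t) P"
    and "\<beta> \<equiv> h n / h (n - 1)"
    and "R \<equiv> B * t powr \<alpha> * exp (- t) * (poly (P n) t)^2 / h n"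
    and "r \<equiv> B * t powr \<alpha> * exp (- t) * poly (P n) t * poly (P (n - 1)) t / h (n - 1)"
  assumes "R \<noteq> 0" and "R \<noteq> 1"
  shows "\<beta> = 1 / (1 - R) * (r * (2 * real n + \<alpha>) + real n * (real n + \<alpha>) + r^2 / R)"
proof -
  interpret jlP \<alpha> A B t P using assms by unfold_locales auto
  define W where "W = B * t powr \<alpha> * exp (- t)"
  define u where "u = poly (P n) t"
  define v where "v = poly (P (n - 1)) t"
  define H where "H = h n"
  define G where "G = h (n - 1)"
  have hH: "H = ip (P n) (P n)" and hG: "G = ip (P (n-1)) (P (n-1))"
    unfolding H_def G_def h_def norm_eq by simp_all
  have RR: "R = W * u^2 / H" unfolding R_def W_def u_def H_def by simp
  have rr: "r = W * u * v / G" unfolding r_def W_def u_def v_def G_def by simp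
  have bb: "\<beta> = H / G" unfolding \<beta>_def H_def G_def by simp
  have H0: "H \<noteq> 0" and W0: "W \<noteq> 0" and u0: "u \<noteq> 0" using \<open>R \<noteq> 0\<close> unfolding RR by auto
  have G0: "G \<noteq> 0" using g_nonzero[of n] assms H0 unfolding hH hG by auto
  have id: "(H - W * u^2) * (G - W * v^2) = (n * G + W * u * v) * (n * G + W * u * v + \<alpha> * G)"
    using main_identity[of n] assms unfolding hH hG W_def u_def v_def by simp
  have R1: "1 - R \<noteq> 0" using \<open>R \<noteq> 1\<close> by simp
  have "G * H - G * W * u^2 = W * u * v * G * (2 * n + \<alpha>) + n * (n + \<alpha>) * G^2 + W * v^2 * H"
    using id by (simp add: algebra_simps power2_eq_square)
  note E = this
  have L: "\<beta> * (1 - R) = (G * H - G * W * u^2) / G^2"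
    unfolding bb RR using H0 G0 by (simp add: field_simps power2_eq_square)
  have Rt: "r * (2 * real n + \<alpha>) + real n * (real n + \<alpha>) + r^2 / R
      = (W * u * v * G * (2 * n + \<alpha>) + n * (n + \<alpha>) * G^2 + W * v^2 * H) / G^2"
    unfolding rr RR using H0 G0 W0 u0 by (simp add: field_simps power2_eq_square)
  have key: "\<beta> * (1 - R) = r * (2 * real n + \<alpha>) + real n * (real n + \<alpha>) + r^2 / R"
    unfolding L Rt E ..
  show ?thesis using key R1 by (simp add: field_simps)
qed

end
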